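(* Consider the inhomogeneous stochastic higher spin six vertex model in the quadrant $\mathbb{Z}_{\ge1}^2$ with the step boundary condition and parameters $u_1,u_2,\ldots\in(-\infty,0)$, $a_1,a_2,\ldots\in(0,+\infty)$, $\nu_1,\nu_2,\ldots\in(0,1)$, where the $a_i$'s and the $\nu_i$'s are uniformly bounded away from the endpoints of their respective intervals. Then for each $T=1,2,\ldots$, almost surely there are exactly $T$ up-right paths crossing the horizontal line at height $T+\frac12$ (equivalently, the total number of arrows on the vertical edges from $(x,T)$ to $(x,T+1)$, $x\ge1$, equals $T$); in other words, paths cannot stay horizontal forever.
   Context: Fix $q\in(0,1)$. For parameters $u,a,\nu$ define stochastic vertex weights $\mathsf{L}_{u,a,\nu}(i_1,j_1;i_2,j_2)$, $i_1,i_2\in\mathbb{Z}_{\ge0}$, $j_1,j_2\in\{0,1\}$ (here $i_1,j_1$ are the numbers of arrows entering a vertex from below and from the left, $i_2,j_2$ the numbers leaving upwards and to the right), which vanish unless $i_1+j_1=i_2+j_2$, and for $g\in\mathbb{Z}_{\ge0}$: $\mathsf{L}(g,0;g,0)=\frac{1-auq^g}{1-au}$, $\mathsf{L}(g,0;g-1,1)=\frac{-au(1-q^g)}{1-au}$, $\mathsf{L}(g,1;g,1)=\frac{\nu q^g-au}{1-au}$, $\mathsf{L}(g,1;g+1,0)=\frac{1-\nu q^g}{1-au}$. The stochastic higher spin six vertex model with the step boundary condition is the random collection of up-right paths in $\mathbb{Z}_{\ge1}^2$ (paths may share vertices and vertical edges, so vertical edges carry any number of arrows, but each horizontal edge carries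 at most one arrow) defined as follows: one arrow enters each vertex $(1,T)$, $T\ge1$, from the left, and no arrow enters any vertex $(N,1)$ from below. Inductively over $n=2,3,\ldots$, for each vertex $(N,T)$ with $N+T=n$, given the numbers $(i_1,j_1)$ of arrows entering it from below and from the left, the outgoing numbers $(i_2,j_2)$ are sampled independently with probabilities $\mathsf{L}_{u_T,a_N,\nu_N}(i_1,j_1;i_2,j_2)$. *)

theory Defs
  imports "HOL-Probability.Probability"
begin

text \<open>Stochastic vertex weight L_{u,a,nu}(i1,j1;i2,j2) with parameter q.
  i1 / j1: arrows entering from below / from the left;
  i2 / j2: arrows leaving upwards / to the right.\<close>
definition Lw :: "real \<Rightarrow> real \<Rightarrow> real \<Rightarrow> real \<Rightarrow> nat \<Rightarrow> nat \<Rightarrow> nat \<Rightarrow> nat \<Rightarrow> real" where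
  "Lw q u a nu i1 j1 i2 j2 =
    (if i1 + j1 \<noteq> i2 + j2 then 0
     else if j1 = 0 \<and> j2 = 0 then (1 - a * u * q ^ i1) / (1 - a * u)
     else if j1 = 0 \<and> j2 = 1 then (- a * u * (1 - q ^ i1)) / (1 - a * u)
     else if j1 = 1 \<and> j2 = 1 then (nu * q ^ i1 - a * u) / (1 - a * u)
     else if j1 = 1 \<and> j2 = 0 then (1 - nu * q ^ i1) / (1 - a * u)
     else 0)"

text \<open>Deterministic realisation of the model driven by the numbers w (N,T) (which will be
  independent uniform random variables on [0,1]).  vtx q u a nu w N T = (i2, j2) is the pair
  (number of arrows leaving vertex (N,T) upwards, number leaving to the right), for N, T \<ge> 1.
  Inputs: from the left 1 arrow if N = 1, else the right output of (N-1,T);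
  from below 0 arrows if T = 1, else the upward output of (N,T-1).
  The vertex emits an arrow to the right iff w (N,T) < L(i1,j1; i1+j1-1, 1), which happens with
  probability L(i1,j1;i1+j1-1,1) when w (N,T) is uniform on [0,1]; the two possible outcomes
  have probabilities given by the weights L.\<close>
function vtx :: "real \<Rightarrow> (nat \<Rightarrow> real) \<Rightarrow> (nat \<Rightarrow> real) \<Rightarrow> (nat \<Rightarrow> real) \<Rightarrow> (nat \<times> nat \<Rightarrow> real)
    \<Rightarrow> nat \<Rightarrow> nat \<Rightarrow> nat \<times> nat" where
  "vtx q u a nu w N T =
    (let i1 = (if T \<le> 1 then 0 else fst (vtx q u a nu w N (T - 1)));
         j1 = (if N \<le> 1 then 1 else snd (vtx q u a nu w (N - 1) T));
         j2 = (if w (N, T) < Lw q (u T) (a N) (nu N) i1 j1 (i1 + j1 - 1) 1 then 1 else 0)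
     in (i1 + j1 - j2, j2))"
  by pat_completeness auto
termination
  by (relation "Wellfounded.measure (\<lambda>(q, u, a, nu, w, N, T). N + T)") auto

end

theory Submission
  imports Defs
begin

declare vtx.simps[simp del]

lemma vtx_snd:
  "snd (vtx q u a nu w N T) =
    (let i1 = (if T \<le> 1 then 0 else fst (vtx q u a nu w N (T - 1)));
         j1 = (if N \<le> 1 then 1 else snd (vtx q u a nu w (N - 1) T))
     in (if w (N, T) < Lw q (u T) (a N) (nu N) i1 j1 (i1 + j1 - 1) 1 then 1 else 0))"
  by (subst vtx.simps[of q u a nu w N T]) (simp only: Let_def fst_conv snd_conv)

lemma vtx_fst:
  "fst (vtx q u a nu w N T) =
    (let i1 = (if T \<le> 1 then 0 else fst (vtx q u a nu w N (T - 1)));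
         j1 = (if N \<le> 1 then 1 else snd (vtx q u a nu w (N - 1) T))
     in i1 + j1 - snd (vtx q u a nu w N T))"
  by (subst vtx.simps[of q u a nu w N T]) (simp only: Let_def fst_conv vtx_snd[of q u a nu w N T])

lemma vtx_snd_le: "snd (vtx q u a nu w N T) \<le> 1"
  by (subst vtx_snd) (simp add: Let_def)

lemma vtx_cons:
  assumes "0 \<le> w (N, T)"
  shows "fst (vtx q u a nu w N T) + snd (vtx q u a nu w N T) =
    (if T \<le> 1 then 0 else fst (vtx q u a nu w N (T - 1))) +
    (if N \<le> 1 then 1 else snd (vtx q u a nu w (N - 1) T))"
proof -
  define i1 where "i1 = (if T \<le> 1 then 0 else fst (vtx q u a nu w N (T - 1)))"
  define j1 where "j1 = (if N \<le> 1 then 1 else snd (vtx q u a nu w (N - 1) T))"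
  have f: "fst (vtx q u a nu w N T) = i1 + j1 - snd (vtx q u a nu w N T)"
    unfolding i1_def j1_def by (subst vtx_fst) (simp add: Let_def)
  have s: "snd (vtx q u a nu w N T) = (if w (N, T) < Lw q (u T) (a N) (nu N) i1 j1 (i1 + j1 - 1) 1 then 1 else 0)"
    unfolding i1_def j1_def by (subst vtx_snd) (simp add: Let_def)
  have "snd (vtx q u a nu w N T) \<le> i1 + j1"
  proof (cases "i1 + j1 = 0")
    case True
    then have "Lw q (u T) (a N) (nu N) i1 j1 (i1 + j1 - 1) 1 = 0" by (simp add: Lw_def)
    then show ?thesis using s assms by simp
  next
    case False then show ?thesis using vtx_snd_le[of q u a nu w N T] by linarith
  qed
  then show ?thesis using f unfolding i1_def j1_def by linarith
qed

lemma row_sum: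
  assumes w0: "\<And>N. 0 \<le> w (N, T)" and K: "K \<ge> 1"
  shows "(\<Sum>N=1..K. fst (vtx q u a nu w N T)) + snd (vtx q u a nu w K T) =
         (\<Sum>N=1..K. (if T \<le> 1 then 0 else fst (vtx q u a nu w N (T - 1)))) + 1"
  using K
proof (induction K)
  case 0 then show ?case by simp
next
  case (Suc K)
  show ?case
  proof (cases "K = 0")
    case True then show ?thesis using vtx_cons[of w 1 T q u a nu, OF w0] by simp
  next
    case False
    then have IH: "(\<Sum>N=1..K. fst (vtx q u a nu w N T)) + snd (vtx q u a nu w K T) =
         (\<Sum>N=1..K. (if T \<le> 1 then 0 else fst (vtx q u a nu w N (T - 1)))) + 1" using Suc by simp
    have c: "fst (vtx q u a nu w (Suc K) T) + snd (vtx q u a nu w (Suc K) T) =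
       (if T \<le> 1 then 0 else fst (vtx q u a nu w (Suc K) (T - 1))) + snd (vtx q u a nu w K T)"
      using vtx_cons[of w "Suc K" T q u a nu, OF w0] False by simp
    show ?thesis using IH c by simp
  qed
qed

lemma row_main:
  assumes w0: "\<And>p. 0 \<le> w p"
    and H: "\<And>T' K. T' \<ge> 1 \<Longrightarrow> \<exists>N\<ge>K. Lw q (u T') (a N) (nu N) 0 1 0 1 \<le> w (N, T')"
    and T: "T \<ge> 1"
  shows "\<exists>K. (\<forall>N>K. fst (vtx q u a nu w N T) = 0) \<and> (\<Sum>N=1..K. fst (vtx q u a nu w N T)) = T"
  using T
proof (induction T)
  case 0 then show ?case by simp
next
  case (Suc T)
  define I1 where "I1 N = (if Suc T \<le> 1 then 0 else fst (vtx q u a nu w N T))" for N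
  have "\<exists>K0. (\<forall>N>K0. I1 N = 0) \<and> (\<Sum>N=1..K0. I1 N) = T"
  proof (cases "T = 0")
    case True then show ?thesis by (rule_tac x=0 in exI) (simp add: I1_def)
  next
    case False
    then obtain K0 where "(\<forall>N>K0. fst (vtx q u a nu w N T) = 0) \<and> (\<Sum>N=1..K0. fst (vtx q u a nu w N T)) = T"
      using Suc by auto
    then show ?thesis using False by (rule_tac x=K0 in exI) (simp add: I1_def)
  qed
  then obtain K0 where K0: "\<And>N. N > K0 \<Longrightarrow> I1 N = 0" "(\<Sum>N=1..K0. I1 N) = T" by blast
  obtain N where N: "N \<ge> K0 + 2" "Lw q (u (Suc T)) (a N) (nu N) 0 1 0 1 \<le> w (N, Suc T)"
    using H[of "Suc T" "K0 + 2"] by auto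
  have "\<exists>N0>K0. snd (vtx q u a nu w N0 (Suc T)) = 0"
  proof (rule ccontr)
    assume nz: "\<not> ?thesis"
    have nz': "\<forall>M>K0. snd (vtx q u a nu w M (Suc T)) \<noteq> 0" using nz by simp
    have NK: "N - 1 > K0" using N(1) by linarith
    have "snd (vtx q u a nu w (N - 1) (Suc T)) \<noteq> 0" using nz' NK by simp
    then have s1: "snd (vtx q u a nu w (N - 1) (Suc T)) = 1"
      using vtx_snd_le[of q u a nu w "N - 1" "Suc T"] by linarith
    have NK2: "N > K0" using N(1) by linarith
    have i0: "I1 N = 0" using K0(1)[OF NK2] .
    have i1: "(if Suc T \<le> 1 then 0 else fst (vtx q u a nu w N (Suc T - 1))) = 0"
      using i0 unfolding I1_def diff_Suc_1 .
    have j1: "(if N \<le> 1 then 1 else snd (vtx q u a nu w (N - 1) (Suc T))) = 1"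
      using s1 N(1) by simp
    have "snd (vtx q u a nu w N (Suc T)) = 0"
      unfolding vtx_snd[of q u a nu w N "Suc T"] Let_def i1 j1 using N(2) by simp
    then show False using nz' NK2 by simp
  qed
  then obtain N0 where N0: "N0 > K0" "snd (vtx q u a nu w N0 (Suc T)) = 0" by blast
  have z: "snd (vtx q u a nu w (N0 + n) (Suc T)) = 0 \<and> (n > 0 \<longrightarrow> fst (vtx q u a nu w (N0 + n) (Suc T)) = 0)" for n
  proof (induction n)
    case 0 then show ?case using N0 by simp
  next
    case (Suc n)
    have "I1 (N0 + Suc n) = 0" using K0(1) N0(1) by simp
    then have "(if Suc T \<le> 1 then 0 else fst (vtx q u a nu w (N0 + Suc n) (Suc T - 1))) = 0"
      unfolding I1_def diff_Suc_1 .
    moreover have "(if N0 + Suc n \<le> 1 then 1 else snd (vtx q u a nu w (N0 + Suc n - 1) (Suc T))) = 0"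
      using Suc.IH N0(1) by simp
    ultimately show ?case using vtx_cons[of w "N0 + Suc n" "Suc T" q u a nu, OF w0] by simp
  qed
  have rs: "(\<Sum>N=1..N0. fst (vtx q u a nu w N (Suc T))) + 0 = (\<Sum>N=1..N0. I1 N) + 1"
    using row_sum[of w "Suc T" N0 q u a nu] w0 N0 unfolding I1_def diff_Suc_1 by simp
  have "(\<Sum>N=1..N0. I1 N) = (\<Sum>N=1..K0. I1 N)"
    by (rule sum.mono_neutral_right) (use N0 K0 in auto)
  then have "(\<Sum>N=1..N0. fst (vtx q u a nu w N (Suc T))) = Suc T" using rs K0 by simp
  moreover have "\<forall>N>N0. fst (vtx q u a nu w N (Suc T)) = 0"
  proof (intro allI impI)
    fix N assume "N > N0"
    then obtain n where "N = N0 + n" "n > 0" using less_imp_add_positive by blast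
    then show "fst (vtx q u a nu w N (Suc T)) = 0" using z by simp
  qed
  ultimately show ?case by blast
qed


lemma prob_lt:
  assumes meas: "X \<in> borel_measurable M"
    and d: "distr M borel X = uniform_measure lborel {0..1::real}"
    and c: "0 \<le> c" "c \<le> 1"
  shows "emeasure M {\<omega>\<in>space M. X \<omega> < c} = ennreal c"
proof -
  have e: "{\<omega>\<in>space M. X \<omega> < c} = X -` {..<c} \<inter> space M" by auto
  have "emeasure M (X -` {..<c} \<inter> space M) = emeasure (distr M borel X) {..<c}"
    by (simp add: emeasure_distr meas)
  also have "\<dots> = emeasure (uniform_measure lborel {0..1::real}) {..<c}" using d by simp
  also have "\<dots> = emeasure lborel ({0..1::real} \<inter> {..<c}) / emeasure lborel {0..1::real}"
    by simp
  also have "{0..1::real} \<inter> {..<c} = {0..<c}" using c by auto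
  also have "emeasure lborel {0..<c} / emeasure lborel {0..1::real} = ennreal c"
    using c divide_ennreal[of c 1] by simp
  finally show ?thesis using e by simp
qed

lemma tail:
  fixes U :: "nat \<times> nat \<Rightarrow> 'w \<Rightarrow> real" and K T :: nat
  assumes M: "prob_space M"
    and indep: "prob_space.indep_vars M (\<lambda>_. borel) U UNIV"
    and unif: "\<And>p. distr M borel (U p) = uniform_measure lborel {0..1::real}"
    and c: "0 \<le> c" "c < 1"
  shows "AE \<omega> in M. \<exists>N\<ge>K. c \<le> U (N, T) \<omega>"
proof -
  interpret prob_space M by (rule M)
  have meas[measurable]: "U p \<in> borel_measurable M" for p
    using indep unfolding indep_vars_def2 by blast
  have ind: "indep_sets (\<lambda>i. {U i -` B \<inter> space M | B. B \<in> sets borel}) UNIV"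
    using indep unfolding indep_vars_def2 by auto
  define S where "S = {\<omega>\<in>space M. \<forall>N\<in>{K..}. U (N, T) \<omega> < c}"
  have Sm1: "{\<omega>\<in>space M. U (N, T) \<omega> < c} \<in> sets M" for N by measurable
  have Sm: "S \<in> sets M" unfolding S_def
    apply (rule sets.sets_Collect_countable_All')
     apply (rule Sm1)
    apply (rule countableI_type)
    done
  define A where "A p = {\<omega>\<in>space M. U p \<omega> < c}" for p
  have A_in: "A p \<in> {U p -` B \<inter> space M | B. B \<in> sets borel}" for p
    unfolding A_def by (rule CollectI, rule exI[of _ "{..<c}"]) auto
  have Am: "A p \<in> sets M" for p unfolding A_def by measurable
  have pA: "prob (A p) = c" for p
  proof -
    have "ennreal (prob (A p)) = ennreal c"
      using prob_lt[OF meas unif, of c] c unfolding A_def by (simp add: emeasure_eq_measure)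
    then show ?thesis using c by (simp add: ennreal_inj)
  qed
  have bound: "prob S \<le> c ^ Suc m" for m
  proof -
    define J where "J = (\<lambda>N. (N, T)) ` {K..K+m}"
    have Jf: "finite J" "J \<noteq> {}" unfolding J_def by auto
    have cJ: "card J = Suc m" unfolding J_def by (subst card_image) (auto simp: inj_on_def)
    have "S \<subseteq> (\<Inter>j\<in>J. A j)" unfolding S_def A_def J_def by auto
    then have "prob S \<le> prob (\<Inter>j\<in>J. A j)"
      using Jf Am by (intro finite_measure_mono) auto
    also have "\<dots> = (\<Prod>j\<in>J. prob (A j))"
      using Jf A_in by (intro indep_setsD[OF ind]) auto
    also have "\<dots> = c ^ Suc m" using pA cJ by simp
    finally show ?thesis .
  qed
  have lim: "(\<lambda>m. c ^ Suc m) \<longlonglongrightarrow> 0"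
    using c by (intro LIMSEQ_Suc LIMSEQ_power_zero) auto
  have "prob S \<le> 0"
    by (rule LIMSEQ_le_const[OF lim]) (use bound in auto)
  then have "prob S = 0" using measure_nonneg[of M S] by linarith
  then have "emeasure M S = 0" by (simp add: emeasure_eq_measure)
  then show ?thesis
    by (intro AE_I[OF _ _ Sm]) (auto simp: S_def not_le dest: leD)
qed

lemma nonneg:
  assumes M: "prob_space M"
    and meas: "U p \<in> borel_measurable M"
    and unif: "distr M borel (U p) = uniform_measure lborel {0..1::real}"
  shows "AE \<omega> in M. 0 \<le> U p \<omega>"
proof -
  have "emeasure M {\<omega>\<in>space M. U p \<omega> < 0} = 0"
    using prob_lt[OF meas unif, of 0] by simp
  moreover have "{\<omega>\<in>space M. U p \<omega> < 0} \<in> sets M" by measurable (rule meas)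
  ultimately show ?thesis by (intro AE_I[of _ _ "{\<omega>\<in>space M. U p \<omega> < 0}"]) auto
qed


lemma Lw_bound:
  assumes u: "ut < 0" and ea: "0 < ea" "ea \<le> aN" "aN \<le> 1 / ea"
    and en: "0 < en" "en \<le> nuN" "nuN \<le> 1 - en"
  shows "Lw q ut aN nuN 0 1 0 1 \<le> 1 - en * ea / (ea - ut)"
proof -
  have L: "Lw q ut aN nuN 0 1 0 1 = (nuN - aN * ut) / (1 - aN * ut)" by (simp add: Lw_def)
  have "aN * ut < 0" using u ea by (simp add: mult_pos_neg)
  then have p1: "1 - aN * ut > 0" by linarith
  have p2: "ea - ut > 0" using u ea by simp
  have a1: "aN * ea \<le> 1" using ea by (simp add: field_simps)
  have "ea * (1 - aN * ut) \<le> ea - ut"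
  proof -
    have "- (aN * ea * ut) \<le> - ut" using a1 u by (simp add: mult_right_mono_neg)
    then show ?thesis by (simp add: algebra_simps)
  qed
  then have "en * ea * (1 - aN * ut) \<le> (1 - nuN) * (ea - ut)"
    using en p2 by (smt (verit, best) mult.assoc mult_left_mono mult_right_mono)
  then have "en * ea / (ea - ut) \<le> (1 - nuN) / (1 - aN * ut)"
    using p1 p2 by (simp add: divide_simps)
  moreover have "(nuN - aN * ut) / (1 - aN * ut) = 1 - (1 - nuN) / (1 - aN * ut)"
    using p1 by (simp add: field_simps)
  ultimately show ?thesis using L by linarith
qed

theorem lemma3p1:
  fixes q :: real and u a nu :: "nat \<Rightarrow> real"
    and M :: "'w measure" and U :: "nat \<times> nat \<Rightarrow> 'w \<Rightarrow> real"
  assumes q: "0 < q" "q < 1"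
    and u_neg: "\<And>T. T \<ge> 1 \<Longrightarrow> u T < 0"
    and a_bd: "\<exists>\<epsilon>>0. \<forall>N\<ge>1. \<epsilon> \<le> a N \<and> a N \<le> 1 / \<epsilon>"
    and nu_bd: "\<exists>\<epsilon>>0. \<forall>N\<ge>1. \<epsilon> \<le> nu N \<and> nu N \<le> 1 - \<epsilon>"
    and M: "prob_space M"
    and indep: "prob_space.indep_vars M (\<lambda>_. borel) U UNIV"
    and unif: "\<And>p. distr M borel (U p) = uniform_measure lborel {0..1::real}"
    and T: "T \<ge> 1"
  shows "AE \<omega> in M.
           finite {x. x \<ge> 1 \<and> fst (vtx q u a nu (\<lambda>p. U p \<omega>) x T) \<noteq> 0} \<and>
           (\<Sum>x\<in>{x. x \<ge> 1 \<and> fst (vtx q u a nu (\<lambda>p. U p \<omega>) x T) \<noteq> 0}.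
               fst (vtx q u a nu (\<lambda>p. U p \<omega>) x T)) = T"
proof -
  interpret prob_space M by (rule M)
  have meas: "U p \<in> borel_measurable M" for p
    using indep unfolding indep_vars_def2 by blast
  obtain ea where ea: "ea > 0" "\<And>N. N \<ge> 1 \<Longrightarrow> ea \<le> a N \<and> a N \<le> 1 / ea" using a_bd by blast
  obtain en where en: "en > 0" "\<And>N. N \<ge> 1 \<Longrightarrow> en \<le> nu N \<and> nu N \<le> 1 - en" using nu_bd by blast
  define c where "c T' = 1 - en * ea / (ea - u T')" for T'
  have en1: "en \<le> 1" using en(2)[of 1] by simp
  have ea1: "ea \<le> 1"
  proof -
    have "ea \<le> 1 / ea" using ea(2)[of 1] by simp
    then have "ea * ea \<le> 1" using ea(1) by (simp add: field_simps)
    show ?thesis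
    proof (rule ccontr)
      assume "\<not> ea \<le> 1"
      then have "1 * 1 < ea * ea" by (intro mult_strict_mono) auto
      then show False using \<open>ea * ea \<le> 1\<close> by simp
    qed
  qed
  have c_rng: "0 \<le> c T' \<and> c T' < 1" if "T' \<ge> 1" for T'
  proof -
    have ut: "u T' < 0" using u_neg that by simp
    have p: "ea - u T' > 0" using ut ea by simp
    have "en * ea \<le> 1 * ea" by (rule mult_right_mono) (use en1 ea in auto)
    then have "en * ea \<le> ea - u T'" using ut by linarith
    then have "en * ea / (ea - u T') \<le> 1" using p by simp
    moreover have "en * ea / (ea - u T') > 0" using p en ea by simp
    ultimately show ?thesis unfolding c_def by linarith
  qed
  have Lc: "Lw q (u T') (a N) (nu N) 0 1 0 1 \<le> c T'" if "T' \<ge> 1" "N \<ge> 1" for T' N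
  proof -
    have h1: "ea \<le> a N" "a N \<le> 1 / ea" using ea(2)[OF that(2)] by auto
    have h2: "en \<le> nu N" "nu N \<le> 1 - en" using en(2)[OF that(2)] by auto
    show ?thesis unfolding c_def
      by (rule Lw_bound[OF u_neg[OF that(1)] ea(1) h1 en(1) h2])
  qed
  have A1: "AE \<omega> in M. \<forall>p. 0 \<le> U p \<omega>"
    unfolding AE_all_countable by (intro allI nonneg[OF M meas unif])
  have A2: "AE \<omega> in M. \<forall>T'. \<forall>K. T' \<ge> 1 \<longrightarrow> (\<exists>N\<ge>K. c T' \<le> U (N, T') \<omega>)"
    unfolding AE_all_countable
  proof (intro allI)
    fix T' K
    show "AE \<omega> in M. T' \<ge> 1 \<longrightarrow> (\<exists>N\<ge>K. c T' \<le> U (N, T') \<omega>)"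
    proof (cases "T' \<ge> 1")
      case True
      then show ?thesis using tail[OF M indep unif, of "c T'" K T'] c_rng[OF True] by simp
    next
      case False then show ?thesis by simp
    qed
  qed
  show ?thesis
    using A1 A2
  proof eventually_elim
    case (elim \<omega>)
    define w where "w = (\<lambda>p. U p \<omega>)"
    have H: "\<exists>N\<ge>K. Lw q (u T') (a N) (nu N) 0 1 0 1 \<le> w (N, T')" if "T' \<ge> 1" for T' K
    proof -
      have "\<exists>N\<ge>max K 1. c T' \<le> U (N, T') \<omega>" using elim(2)[rule_format, OF that, of "max K 1"] .
      then obtain N where "N \<ge> max K 1" "c T' \<le> U (N, T') \<omega>" by blast
      then show ?thesis using Lc[OF that, of N] unfolding w_def
        by (intro exI[of _ N]) auto
    qed
    have w0: "\<And>p. 0 \<le> w p" unfolding w_def by (rule elim(1)[rule_format])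
    have "\<exists>K. (\<forall>N>K. fst (vtx q u a nu w N T) = 0) \<and> (\<Sum>N=1..K. fst (vtx q u a nu w N T)) = T"
      by (rule row_main[OF w0 H T])
    then obtain K where K: "\<forall>N>K. fst (vtx q u a nu w N T) = 0" "(\<Sum>N=1..K. fst (vtx q u a nu w N T)) = T"
      by blast
    define S where "S = {x. x \<ge> 1 \<and> fst (vtx q u a nu w x T) \<noteq> 0}"
    have sub: "S \<subseteq> {1..K}" unfolding S_def using K(1) by (auto simp: not_less[symmetric])
    have "finite S" using sub finite_subset by blast
    moreover have "(\<Sum>x\<in>S. fst (vtx q u a nu w x T)) = (\<Sum>N=1..K. fst (vtx q u a nu w N T))"
      by (rule sum.mono_neutral_left) (use sub in \<open>auto simp: S_def\<close>)
    ultimately show ?case using K(2) unfolding S_def w_def by simp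
  qed
qed

end
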